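(* For $\mathbf r,\mathbf r'\in\mathbb R^2$ let $$\rho^T(\mathbf r,\mathbf r')=-\frac{1}{\pi^2}\,e^{-|\mathbf r-\mathbf r'|^2}$$ (the truncated two-point correlation of the bulk scaled complex Ginibre ensemble, whose bulk density is $1/\pi$). Then, with $\beta=2$, the Carnie–Chan sum rule holds: $$-\beta\int_{\mathbb R^2}d\mathbf r\,\bigg(\int_{\mathbb R^2}\log|\mathbf r'|\,\rho^T(\mathbf r,\mathbf r')\,d\mathbf r'+\frac1\pi\log|\mathbf r|\bigg)=1,$$ where the integral over $\mathbf r'$ is carried out first, for each fixed $\mathbf r\neq\mathbf 0$.
   Context: The inner expression is the integral over $\mathbf r'$ of $\log|\mathbf r'|\big(\rho^T(\mathbf r,\mathbf r')+\frac1\pi\delta(\mathbf r-\mathbf r')\big)$; the order of integration matters (integrating over $\mathbf r$ first would give $0$). *)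

theory Defs
  imports "HOL-Analysis.Analysis"
begin

definition rhoT :: "real^2 \<Rightarrow> real^2 \<Rightarrow> real" where
  "rhoT r r' = - (1 / (pi ^ 2)) * exp (- ((norm (r - r')) ^ 2))"

definition CC_inner :: "real^2 \<Rightarrow> real" where
  "CC_inner r = (\<integral>r'. ln (norm r') * rhoT r r' \<partial>lborel) + (1 / pi) * ln (norm r)"

end

theory Submission
  imports Defs "HOL-Complex_Analysis.Complex_Analysis" "HOL-Probability.Distributions" "HOL-Real_Asymp.Real_Asymp"
begin

lemma circle_mean_Ln:
  assumes w: "norm w < 1"
  shows "((\<lambda>t. ln (cmod (1 + w * exp (2 * of_real pi * \<i> * of_real t)))) has_integral 0) {0..1}"
proof -
  define f where "f = (\<lambda>u. Ln (1 + w * u))"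
  have nz: "1 + w * u \<notin> \<real>\<^sub>\<le>\<^sub>0" if "norm u \<le> 1" for u
  proof -
    have "norm (w * u) < 1" using w that by (simp add: norm_mult mult_le_one[of "norm w"]) (metis le_less_trans mult_left_le norm_ge_zero)
    hence "Re (w*u) > -1" using abs_Re_le_cmod[of "w*u"] by linarith
    thus ?thesis by (auto simp: complex_nonpos_Reals_iff)
  qed
  have hol: "f holomorphic_on cball 0 1"
    unfolding f_def by (intro holomorphic_intros) (use nz in auto)
  have "((\<lambda>u. f u/(u-0)) has_contour_integral (2 * of_real pi * \<i> * f 0)) (circlepath 0 1)"
    by (rule Cauchy_integral_circlepath) (auto intro: holomorphic_on_imp_continuous_on hol holomorphic_on_subset[OF hol])
  hence "((\<lambda>u. f u/(u-0)) has_contour_integral 0) (circlepath 0 1)" by (simp add: f_def)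
  hence "((\<lambda>x. f (circlepath 0 1 x) / (circlepath 0 1 x - 0) * vector_derivative (circlepath 0 1) (at x within {0..1})) has_integral 0) {0..1}"
    unfolding has_contour_integral_def .
  hence "((\<lambda>t. (2 * pi * \<i>) * f (exp (2 * of_real pi * \<i> * of_real t))) has_integral 0) {0..1}"
  proof (rule has_integral_eq[rotated])
    fix x :: real assume "x \<in> {0..1}"
    hence vd: "vector_derivative (circlepath 0 1) (at x within {0..1}) = 2 * pi * \<i> * 1 * exp(2 * of_real pi * \<i> * x)"
      using vector_derivative_circlepath01 by auto
    have "exp(2 * of_real pi * \<i> * x) \<noteq> 0" by simp
    then show "f (circlepath 0 1 x) / (circlepath 0 1 x - 0) * vector_derivative (circlepath 0 1) (at x within {0..1}) = (2 * pi * \<i>) * f (exp (2 * of_real pi * \<i> * of_real x))"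
      unfolding vd by (simp add: circlepath field_simps)
  qed
  from has_integral_mult_right[OF this, of "inverse (2 * pi * \<i>)"]
  have "((\<lambda>t. inverse (2 * pi * \<i>) * ((2 * pi * \<i>) * f (exp (2 * of_real pi * \<i> * of_real t)))) has_integral 0) {0..1}"
    by simp
  hence "((\<lambda>t. f (exp (2 * of_real pi * \<i> * of_real t))) has_integral 0) {0..1}"
    by (rule has_integral_eq[rotated]) (simp add: field_simps)
  from has_integral_Re[OF this]
  have "((\<lambda>t. Re (f (exp (2 * of_real pi * \<i> * of_real t)))) has_integral 0) {0..1}" by simp
  then show ?thesis
  proof (rule has_integral_eq[rotated])
    fix t :: real
    have "1 + w * exp (2 * of_real pi * \<i> * of_real t) \<notin> \<real>\<^sub>\<le>\<^sub>0" by (rule nz) (simp add: norm_exp)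
    hence "1 + w * exp (2 * of_real pi * \<i> * of_real t) \<noteq> 0" by auto
    thus "Re (f (exp (2 * of_real pi * \<i> * of_real t))) = ln (cmod (1 + w * exp (2 * of_real pi * \<i> * of_real t)))"
      by (simp add: f_def)
  qed
qed

lemma circle_mean_log:
  fixes z :: complex and a :: real
  assumes z: "z \<noteq> 0" and a: "a > 0" "a \<noteq> cmod z"
  shows "((\<lambda>t. ln (cmod (z + a * exp (2 * of_real pi * \<i> * of_real t)))) has_integral max (ln (cmod z)) (ln a)) {0..1}"
proof (cases "a < cmod z")
  case True
  define w where "w = a / z"
  have w: "norm w < 1" using True z a by (simp add: w_def norm_divide)
  have "((\<lambda>t. ln (cmod z) + ln (cmod (1 + w * exp (2 * of_real pi * \<i> * of_real t)))) has_integral (ln (cmod z) + 0)) {0..1}"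
    by (intro has_integral_add circle_mean_Ln w) (use has_integral_const_real[of "ln (cmod z)" 0 1] in simp)
  moreover have "ln a < ln (cmod z)" using True a z by (subst ln_less_cancel_iff) auto
  hence "ln (cmod z) + 0 = max (ln (cmod z)) (ln a)" by (simp add: max_def)
  ultimately have "((\<lambda>t. ln (cmod z) + ln (cmod (1 + w * exp (2 * of_real pi * \<i> * of_real t)))) has_integral max (ln (cmod z)) (ln a)) {0..1}"
    by simp
  then show ?thesis
  proof (rule has_integral_eq[rotated])
    fix t :: real
    let ?e = "exp (2 * of_real pi * \<i> * of_real t)"
    have ne: "cmod (w * ?e) < 1" using w by (simp add: norm_mult norm_exp)
    have "1 + w * ?e \<noteq> 0"
    proof
      assume "1 + w * ?e = 0" hence "w * ?e = -1" by (simp add: add_eq_0_iff)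
      with ne show False by simp
    qed
    moreover have "z + a * ?e = z * (1 + w * ?e)" using z by (simp add: w_def field_simps)
    ultimately show "ln (cmod z) + ln (cmod (1 + w * ?e)) = ln (cmod (z + a * ?e))"
      using z by (simp add: norm_mult ln_mult)
  qed
next
  case False
  hence lt: "cmod z < a" using a by simp
  define w where "w = cnj z / a"
  have w: "norm w < 1" using lt z a by (simp add: w_def norm_divide)
  have "((\<lambda>t. ln a + ln (cmod (1 + w * exp (2 * of_real pi * \<i> * of_real t)))) has_integral (ln a + 0)) {0..1}"
    by (intro has_integral_add circle_mean_Ln w) (use has_integral_const_real[of "ln a" 0 1] in simp)
  moreover have "ln (cmod z) < ln a" using lt a z by (subst ln_less_cancel_iff) auto
  hence "ln a + 0 = max (ln (cmod z)) (ln a)" by (simp add: max_def)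
  ultimately have "((\<lambda>t. ln a + ln (cmod (1 + w * exp (2 * of_real pi * \<i> * of_real t)))) has_integral max (ln (cmod z)) (ln a)) {0..1}"
    by simp
  then show ?thesis
  proof (rule has_integral_eq[rotated])
    fix t :: real
    let ?e = "exp (2 * of_real pi * \<i> * of_real t)"
    have ne: "cmod (w * ?e) < 1" using w by (simp add: norm_mult norm_exp)
    have "1 + w * ?e \<noteq> 0"
    proof
      assume "1 + w * ?e = 0" hence "w * ?e = -1" by (simp add: add_eq_0_iff)
      with ne show False by simp
    qed
    moreover have "cmod (z + a * ?e) = a * cmod (1 + w * ?e)"
    proof -
      have "cmod ?e = 1" by (simp add: norm_exp_eq_Re)
      then have e1: "cnj ?e * ?e = 1" using complex_norm_square[of ?e] by (simp add: mult.commute)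
      have "cmod (z + a * ?e) = cmod (cnj (z + a * ?e) * ?e)" by (simp only: norm_mult complex_mod_cnj \<open>cmod ?e = 1\<close> mult_1_right)
      also have "cnj (z + a * ?e) * ?e = a * (1 + w * ?e)"
        using a e1 by (simp add: w_def field_simps)
      also have "cmod (complex_of_real a * (1 + w * ?e)) = a * cmod (1 + w * ?e)"
        using a by (simp add: norm_mult)
      finally show ?thesis .
    qed
    ultimately show "ln a + ln (cmod (1 + w * ?e)) = ln (cmod (z + a * ?e))"
      using a by (simp add: ln_mult)
  qed
qed


definition T2 :: "real \<times> real \<Rightarrow> real^2" where
  "T2 p = fst p *\<^sub>R axis 1 1 + snd p *\<^sub>R axis 2 1"

lemma T2_nth [simp]: "T2 p $ 1 = fst p" "T2 p $ 2 = snd p"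
  by (simp_all add: T2_def axis_def)

lemma T2_measurable [measurable]: "T2 \<in> borel_measurable (lborel \<Otimes>\<^sub>M lborel)"
  unfolding T2_def by measurable

lemma norm_vec2: "norm (x::real^2) = sqrt ((x$1)^2 + (x$2)^2)"
  by (simp add: norm_vec_def L2_set_def UNIV_2)

lemma Basis_vec2: "(Basis :: (real^2) set) = {axis 1 1, axis 2 1}"
  by (auto simp: Basis_vec_def UNIV_2)

lemma lborel_T2: "distr (lborel \<Otimes>\<^sub>M lborel) borel T2 = (lborel :: (real^2) measure)"
proof (rule lborel_eqI[symmetric])
  fix l u :: "real^2"
  assume lu: "\<And>b. b \<in> Basis \<Longrightarrow> l \<bullet> b \<le> u \<bullet> b"
  have l1: "l$1 \<le> u$1" using lu[of "axis 1 1"] by (simp add: Basis_vec2 inner_axis)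
  have l2: "l$2 \<le> u$2" using lu[of "axis 2 1"] by (simp add: Basis_vec2 inner_axis)
  have pre: "T2 -` box l u \<inter> space (lborel \<Otimes>\<^sub>M lborel) = {l$1<..<u$1} \<times> {l$2<..<u$2}"
    by (auto simp: mem_box_cart forall_2 space_pair_measure)
  have "emeasure (distr (lborel \<Otimes>\<^sub>M lborel) borel T2) (box l u) = emeasure (lborel \<Otimes>\<^sub>M lborel) ({l$1<..<u$1} \<times> {l$2<..<u$2})"
    by (subst emeasure_distr) (simp_all add: pre)
  also have "\<dots> = ennreal ((u$1 - l$1) * (u$2 - l$2))"
    using l1 l2 by (simp add: lborel.emeasure_pair_measure_Times ennreal_mult)
  also have "(u$1 - l$1) * (u$2 - l$2) = (\<Prod>b\<in>Basis. (u - l) \<bullet> b)"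
    by (simp add: Basis_vec2 inner_axis axis_eq_axis)
  finally show "emeasure (distr (lborel \<Otimes>\<^sub>M lborel) borel T2) (box l u) = (\<Prod>b\<in>Basis. (u - l) \<bullet> b)" .
qed simp

lemma integrable_T2:
  fixes h :: "real^2 \<Rightarrow> real"
  assumes [measurable]: "h \<in> borel_measurable borel"
  shows "integrable lborel h \<longleftrightarrow> integrable (lborel \<Otimes>\<^sub>M lborel) (\<lambda>p. h (T2 p))"
  by (subst lborel_T2[symmetric], subst integrable_distr_eq) auto

lemma integral_T2:
  fixes h :: "real^2 \<Rightarrow> real"
  assumes [measurable]: "h \<in> borel_measurable borel"
  shows "integral\<^sup>L lborel h = integral\<^sup>L (lborel \<Otimes>\<^sub>M lborel) (\<lambda>p. h (T2 p))"
  by (subst lborel_T2[symmetric], subst integral_distr) auto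

definition pol :: "real^2 \<Rightarrow> real^2" where
  "pol p = T2 (p$1 * cos (2 * pi * p$2), p$1 * sin (2 * pi * p$2))"

definition pol' :: "real^2 \<Rightarrow> real^2 \<Rightarrow> real^2" where
  "pol' p h = T2 (h$1 * cos (2 * pi * p$2) - p$1 * sin (2 * pi * p$2) * (2 * pi * h$2),
                  h$1 * sin (2 * pi * p$2) + p$1 * cos (2 * pi * p$2) * (2 * pi * h$2))"

lemma hd_nth [derivative_intros]: "((\<lambda>x::real^2. x$i) has_derivative (\<lambda>h. h$i)) F"
  by (rule bounded_linear_imp_has_derivative) (rule bounded_linear_vec_nth)

lemma pol_deriv: "(pol has_derivative pol' p) (at p within S)"
  unfolding pol_def pol'_def T2_def fst_conv snd_conv
  by (auto intro!: derivative_eq_intros simp: fun_eq_iff algebra_simps)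

lemma det_pol': "det (matrix (pol' p)) = 2 * pi * p$1"
proof -
  let ?c = "cos (pi * (2 * p $ 2))" and ?s = "sin (pi * (2 * p $ 2))"
  have "det (matrix (pol' p)) = pi * (p $ 1 * (2 * (?c * ?c))) + pi * (p $ 1 * (2 * (?s * ?s)))"
    by (simp add: det_2 matrix_def pol'_def axis_def algebra_simps)
  also have "\<dots> = 2 * pi * p$1 * (?c * ?c + ?s * ?s)" by algebra
  also have "?c * ?c + ?s * ?s = 1" by (rule sin_cos_squared_add3)
  finally show ?thesis by simp
qed

definition cx :: "real^2 \<Rightarrow> complex" where "cx x = Complex (x$1) (x$2)"

lemma cx_pol: "cx (pol p) = of_real (p$1) * exp (\<i> * of_real (2 * pi * p$2))"
  by (simp add: complex_eq_iff cx_def pol_def Re_exp Im_exp)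

lemma cx_add: "cx (x + y) = cx x + cx y"
  by (simp add: complex_eq_iff cx_def)

lemma cx_eq_iff: "cx x = cx y \<longleftrightarrow> x = y"
  by (auto simp: complex_eq_iff cx_def vec_eq_iff forall_2)

lemma norm_cx: "cmod (cx x) = norm x"
  by (simp add: cx_def complex_norm norm_vec2)

definition Sp :: "(real^2) set" where "Sp = {p. 0 < p$1 \<and> 0 \<le> p$2 \<and> p$2 < 1}"

lemma Sp_sets [measurable]: "Sp \<in> sets borel"
  unfolding Sp_def by measurable

lemma inj_pol: "inj_on pol Sp"
proof (rule inj_onI)
  fix p q assume p: "p \<in> Sp" and q: "q \<in> Sp" and eq: "pol p = pol q"
  let ?z = "cx (pol p)"
  have zp: "?z = of_real (p$1) * exp (\<i> * of_real (2 * pi * p$2))" by (rule cx_pol)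
  have zq: "?z = of_real (q$1) * exp (\<i> * of_real (2 * pi * q$2))" by (simp add: eq cx_pol)
  have "Arg2pi ?z = 2 * pi * p$2" by (rule Arg2pi_unique[OF zp[symmetric]]) (use p in \<open>auto simp: Sp_def\<close>)
  moreover have "Arg2pi ?z = 2 * pi * q$2" by (rule Arg2pi_unique[OF zq[symmetric]]) (use q in \<open>auto simp: Sp_def\<close>)
  ultimately have 2: "p$2 = q$2" by simp
  have "cmod ?z = p$1" using p zp by (simp add: norm_mult Sp_def)
  moreover have "cmod ?z = q$1" using q zq by (simp add: norm_mult Sp_def)
  ultimately have 1: "p$1 = q$1" by simp
  show "p = q" using 1 2 by (simp add: vec_eq_iff forall_2)
qed

lemma pol_image: "UNIV - pol ` Sp \<subseteq> {x. x$2 = 0}"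
proof
  fix x assume x: "x \<in> UNIV - pol ` Sp"
  show "x \<in> {x. x$2 = 0}"
  proof (rule ccontr)
    assume "x \<notin> {x. x$2 = 0}"
    hence "x$2 \<noteq> 0" by simp
    define z where "z = cx x"
    have z0: "z \<noteq> 0" using \<open>x$2 \<noteq> 0\<close> by (simp add: z_def cx_def complex_eq_iff)
    define p :: "real^2" where "p = T2 (cmod z, Arg2pi z / (2 * pi))"
    have "p \<in> Sp" using z0 Arg2pi_ge_0[of z] Arg2pi_lt_2pi[of z] by (simp add: p_def Sp_def)
    moreover have "pol p = x"
      using cos_Arg2pi[of z] sin_Arg2pi[of z]
      by (simp add: pol_def p_def z_def vec_eq_iff forall_2 cx_def)
    ultimately show False using x by auto
  qed
qed

lemma polar_integral:
  fixes f :: "real^2 \<Rightarrow> real" and c :: "real^2"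
  assumes f[measurable]: "f \<in> borel_measurable borel"
  and int: "(\<lambda>p. (2 * pi * p$1) * f (c + pol p)) absolutely_integrable_on Sp"
  and val: "integral Sp (\<lambda>p. (2 * pi * p$1) * f (c + pol p)) = b"
  shows "integrable lborel f" "integral\<^sup>L lborel f = b"
proof -
  let ?g = "\<lambda>p. c + pol p"
  have eqS: "\<And>p. p \<in> Sp \<Longrightarrow> \<bar>det (matrix (pol' p))\<bar> *\<^sub>R f (?g p) = (2 * pi * p$1) * f (c + pol p)"
    by (simp add: det_pol' Sp_def)
  have "(\<lambda>x. indicator Sp x *\<^sub>R (\<bar>det (matrix (pol' x))\<bar> *\<^sub>R f (?g x))) = (\<lambda>x. indicator Sp x *\<^sub>R ((2 * pi * x$1) * f (c + pol x)))"
    by (rule ext) (auto simp: indicator_def det_pol' Sp_def)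
  hence int': "(\<lambda>x. \<bar>det (matrix (pol' x))\<bar> *\<^sub>R f (?g x)) absolutely_integrable_on Sp"
    using int by (simp add: set_integrable_def)
  have "integral Sp (\<lambda>x. \<bar>det (matrix (pol' x))\<bar> *\<^sub>R f (?g x)) = integral Sp (\<lambda>p. (2 * pi * p$1) * f (c + pol p))"
    by (rule integral_cong) (rule eqS)
  hence val': "integral Sp (\<lambda>x. \<bar>det (matrix (pol' x))\<bar> *\<^sub>R f (?g x)) = b" using val by simp
  have der: "\<And>x. x \<in> Sp \<Longrightarrow> (?g has_derivative pol' x) (at x within Sp)"
    by (auto intro!: derivative_eq_intros pol_deriv)
  have inj: "inj_on ?g Sp" using inj_pol by (auto simp: inj_on_def)
  have Sleb: "Sp \<in> sets lebesgue" by simp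
  have X: "((\<lambda>x. \<bar>det (matrix (pol' x))\<bar> *\<^sub>R vec (f (?g x)) :: real^1) absolutely_integrable_on Sp \<and>
      integral Sp (\<lambda>x. \<bar>det (matrix (pol' x))\<bar> *\<^sub>R vec (f (?g x)) :: real^1) = vec b) \<longleftrightarrow>
      ((\<lambda>x. vec (f x) :: real^1) absolutely_integrable_on (?g ` Sp) \<and> integral (?g ` Sp) (\<lambda>x. vec (f x) :: real^1) = vec b)"
    by (rule has_absolute_integral_change_of_variables[OF Sleb der inj])
  have "(\<lambda>x. \<bar>det (matrix (pol' x))\<bar> *\<^sub>R f (?g x)) absolutely_integrable_on Sp \<and>
      integral Sp (\<lambda>x. \<bar>det (matrix (pol' x))\<bar> *\<^sub>R f (?g x)) = b \<longleftrightarrow>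
      f absolutely_integrable_on (?g ` Sp) \<and> integral (?g ` Sp) f = b"
    using X by (simp add: absolutely_integrable_on_1_iff integral_on_1_eq)
  with int' val' have A: "f absolutely_integrable_on (?g ` Sp)" and B: "integral (?g ` Sp) f = b" by auto
  have negl: "negligible {x \<in> UNIV - ?g ` Sp. f x \<noteq> 0}"
  proof (rule negligible_subset)
    show "negligible ((+) c ` {x. x$2 = (0::real)})"
      by (rule negligible_translation) (rule negligible_standard_hyperplane_cart)
    show "{x \<in> UNIV - ?g ` Sp. f x \<noteq> 0} \<subseteq> (+) c ` {x. x$2 = (0::real)}"
    proof
      fix x assume "x \<in> {x \<in> UNIV - ?g ` Sp. f x \<noteq> 0}"
      hence "x - c \<in> UNIV - pol ` Sp" by (auto simp: image_iff) (metis add.commute diff_add_cancel)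
      hence "(x - c)$2 = 0" using pol_image by auto
      thus "x \<in> (+) c ` {x. x$2 = (0::real)}" by (auto simp: image_iff intro!: exI[of _ "x - c"])
    qed
  qed
  have A': "f absolutely_integrable_on UNIV"
    using A absolutely_integrable_spike_set_eq[where f=f and S="?g ` Sp" and T=UNIV] negl by auto
  have B': "integral UNIV f = b"
    using B integral_spike_set[where f=f and S="?g ` Sp" and T=UNIV] negl by auto
  have "integrable lebesgue f" using A' by (simp add: set_integrable_def)
  thus il: "integrable lborel f" by (simp add: integrable_completion)
  have "integral\<^sup>L lebesgue f = b" using B' integral_lebesgue[OF \<open>integrable lebesgue f\<close>] by simp
  thus "integral\<^sup>L lborel f = b" by (simp add: integral_completion)
qed

lemma pol_cont: "continuous_on UNIV pol"
  unfolding pol_def T2_def fst_conv snd_conv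
  by (intro continuous_intros)

lemma pol_measurable [measurable]: "pol \<in> borel_measurable borel"
  by (rule borel_measurable_continuous_onI[OF pol_cont])

lemma pol_T2: "pol (T2 (a, b)) = T2 (a * cos (2 * pi * b), a * sin (2 * pi * b))"
  by (simp add: pol_def)

lemma indicator_Sp_T2: "indicator Sp (T2 (a, b)) = (indicator {0<..} a * indicator {0..<1} b :: real)"
  by (auto simp: indicator_def Sp_def)

lemma polar_master:
  fixes f :: "real^2 \<Rightarrow> real" and c :: "real^2"
  assumes f[measurable]: "f \<in> borel_measurable borel"
  defines "H \<equiv> \<lambda>a b. indicator {0<..} a * indicator {0..<1} b * (2 * pi * a * f (c + T2 (a * cos (2 * pi * b), a * sin (2 * pi * b))))"
  assumes integ1: "integrable lborel (\<lambda>a. \<integral>b. norm (H a b) \<partial>lborel)"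
    and integ2: "AE a in lborel. integrable lborel (\<lambda>b. H a b)"
    and val: "(\<integral>a. (\<integral>b. H a b \<partial>lborel) \<partial>lborel) = v"
  shows "integrable lborel f" "integral\<^sup>L lborel f = v"
proof -
  define F where "F = (\<lambda>p. (2 * pi * p$1) * f (c + pol p))"
  have F[measurable]: "F \<in> borel_measurable borel" unfolding F_def by measurable
  define G where "G = (\<lambda>q. indicator Sp (T2 q) * F (T2 q))"
  have G[measurable]: "G \<in> borel_measurable (lborel \<Otimes>\<^sub>M lborel)" unfolding G_def by measurable
  have GH: "G (a, b) = H a b" for a b
    by (simp add: G_def H_def F_def indicator_Sp_T2 pol_T2 mult.assoc)
  have intG: "integrable (lborel \<Otimes>\<^sub>M lborel) G"
    by (rule lborel_pair.Fubini_integrable) (use integ1 integ2 in \<open>simp_all add: GH\<close>)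
  have "integral\<^sup>L (lborel \<Otimes>\<^sub>M lborel) G = v"
    using lborel_pair.integral_fst'[OF intG] val by (simp add: GH)
  have iG: "integrable lborel (\<lambda>x. indicator Sp x *\<^sub>R F x)"
    using intG by (subst integrable_T2) (simp_all add: G_def)
  have "integral\<^sup>L lborel (\<lambda>x. indicator Sp x *\<^sub>R F x) = integral\<^sup>L (lborel \<Otimes>\<^sub>M lborel) G"
    by (subst integral_T2) (simp_all add: G_def)
  hence vv: "integral\<^sup>L lborel (\<lambda>x. indicator Sp x *\<^sub>R F x) = v"
    using \<open>integral\<^sup>L (lborel \<Otimes>\<^sub>M lborel) G = v\<close> by simp
  have absF: "F absolutely_integrable_on Sp"
    using iG by (simp add: set_integrable_def integrable_completion)
  have "integral Sp F = v"
    using set_lebesgue_integral_eq_integral(2)[OF absF] vv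
    by (simp add: set_lebesgue_integral_def integral_completion)
  show "integrable lborel f" "integral\<^sup>L lborel f = v"
    using polar_integral[OF f, of c] absF \<open>integral Sp F = v\<close> by (simp_all add: F_def)
qed


lemma HK_to_L:
  fixes \<phi> :: "real \<Rightarrow> real"
  assumes cont: "continuous_on {0..1} \<phi>" and hi: "(\<phi> has_integral I) {0..1}"
  shows "integrable lborel (\<lambda>b. indicator {0..<1} b * \<phi> b)" "(\<integral>b. indicator {0..<1} b * \<phi> b \<partial>lborel) = I"
proof -
  have si: "set_integrable lborel {0..1} \<phi>" by (rule borel_integrable_atLeastAtMost'[OF cont])
  hence i1: "integrable lborel (\<lambda>b. indicator {0..1} b * \<phi> b)" by (simp add: set_integrable_def)
  have m1: "(\<lambda>b. indicator {0..1} b * \<phi> b) \<in> borel_measurable lborel" using i1 by (rule borel_measurable_integrable)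
  have eq: "indicator {0..<1} b * \<phi> b = indicator {0..<1} b * (indicator {0..1} b * \<phi> b)" for b :: real
    by (auto simp: indicator_def)
  have m2: "(\<lambda>b. indicator {0..<1} b * \<phi> b) \<in> borel_measurable lborel"
    unfolding eq using m1 by measurable
  have ae: "AE b in lborel. indicator {0..1} b * \<phi> b = indicator {0..<1} b * \<phi> b"
    using AE_lborel_singleton[of 1] by eventually_elim (auto simp: indicator_def)
  show "integrable lborel (\<lambda>b. indicator {0..<1} b * \<phi> b)"
    using integrable_cong_AE[OF m1 m2 ae] i1 by simp
  have "(\<integral>b. indicator {0..<1} b * \<phi> b \<partial>lborel) = (\<integral>b. indicator {0..1} b * \<phi> b \<partial>lborel)"
    using integral_cong_AE[OF m1 m2 ae] by simp
  also have "\<dots> = integral {0..1} \<phi>"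
    using set_borel_integral_eq_integral(2)[OF si] by (simp add: set_lebesgue_integral_def)
  also have "\<dots> = I" using hi by (rule integral_unique)
  finally show "(\<integral>b. indicator {0..<1} b * \<phi> b \<partial>lborel) = I" .
qed

lemma gauss1: "has_bochner_integral lborel (\<lambda>a::real. indicator {0<..} a * (a * exp (- a\<^sup>2))) (1/2::real)"
proof -
  have "has_bochner_integral lborel (\<lambda>x::real. indicator {0..} x *\<^sub>R (exp (-x\<^sup>2)*x^(2 * 0 + 1))) (fact 0 / 2)"
    by (rule gaussian_moment_odd_pos)
  thus ?thesis
    by (rule has_bochner_integral_cong[THEN iffD1, rotated 3]) (auto simp: indicator_def)
qed

lemma gauss3: "has_bochner_integral lborel (\<lambda>a::real. indicator {0<..} a * (a^3 * exp (- a\<^sup>2))) (1/2::real)"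
proof -
  have "has_bochner_integral lborel (\<lambda>x::real. indicator {0..} x *\<^sub>R (exp (-x\<^sup>2)*x^(2 * 1 + 1))) (fact 1 / 2)"
    by (rule gaussian_moment_odd_pos)
  thus ?thesis
    by (rule has_bochner_integral_cong[THEN iffD1, rotated 3]) (auto simp: indicator_def)
qed

lemma gauss_int: "integrable lborel (\<lambda>a::real. indicator {0..} a * (exp (- a\<^sup>2) * a^k))"
proof -
  obtain m where "k = 2 * m \<or> k = 2 * m + 1" by (metis oddE evenE)
  moreover have "integrable lborel (\<lambda>x::real. indicator {0..} x *\<^sub>R (exp (-x\<^sup>2)*x^(2 * m)))"
    by (rule integrable.intros[OF gaussian_moment_even_pos])
  moreover have "integrable lborel (\<lambda>x::real. indicator {0..} x *\<^sub>R (exp (-x\<^sup>2)*x^(2 * m + 1)))"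
    by (rule integrable.intros[OF gaussian_moment_odd_pos])
  ultimately show ?thesis by (elim disjE) (simp_all add: algebra_simps)
qed

lemma tri_log:
  fixes s :: real assumes s: "s > 0"
  shows "(\<integral>\<^sup>+a. ennreal (indicator {0<..<s} a * (a * (ln s - ln a))) \<partial>lborel) = ennreal (s\<^sup>2 / 4)"
proof -
  define \<Phi> where "\<Phi> = (\<lambda>a::real. a\<^sup>2 / 2 * ln s - a\<^sup>2 / 2 * ln a + a\<^sup>2 / 4)"
  have der: "(\<Phi> has_real_derivative (x * (ln s - ln x))) (at x)" if "x > 0" for x
    unfolding \<Phi>_def using that
    by (auto intro!: derivative_eq_intros simp: field_simps power2_eq_square)
  have l0: "((\<lambda>a::real. a\<^sup>2 * ln a) \<longlongrightarrow> 0) (at_right 0)" by real_asymp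
  have "((\<lambda>a. a\<^sup>2 / 2 * ln s - (a\<^sup>2 * ln a) / 2 + a\<^sup>2 / 4) \<longlongrightarrow> 0 / 2 * ln s - 0 / 2 + 0 / 4) (at_right 0)"
    by (intro tendsto_intros l0) (auto intro!: tendsto_eq_intros)
  hence r0: "(\<Phi> \<longlongrightarrow> \<Phi> 0) (at_right 0)" by (simp add: \<Phi>_def)
  have "isCont \<Phi> s" using der[OF s] by (rule DERIV_isCont)
  hence "(\<Phi> \<longlongrightarrow> \<Phi> s) (at s)" by (simp add: isCont_def)
  hence ls: "(\<Phi> \<longlongrightarrow> \<Phi> s) (at_left s)" by (simp add: filterlim_at_split)
  have cont: "continuous_on {0..s} \<Phi>"
    by (rule continuous_on_IccI[OF r0 ls _ s]) (auto intro!: isContD[OF DERIV_isCont[OF der]])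
  have "((\<lambda>x. x * (ln s - ln x)) has_integral (\<Phi> s - \<Phi> 0)) {0..s}"
    by (rule fundamental_theorem_of_calculus_interior[OF _ cont])
       (use s der in \<open>auto simp: has_real_derivative_iff_has_vector_derivative[symmetric]\<close>)
  moreover have "\<Phi> s - \<Phi> 0 = s\<^sup>2 / 4" by (simp add: \<Phi>_def)
  ultimately have hi: "((\<lambda>x. x * (ln s - ln x)) has_integral (s\<^sup>2 / 4)) {0..s}" by simp
  have eqf: "(\<lambda>a. indicator {0<..<s} a * (a * (ln s - ln a))) = (\<lambda>a. if a \<in> {0..s} then a * (ln s - ln a) else 0)"
    by (rule ext) (auto simp: indicator_def)
  have "((\<lambda>a. indicator {0<..<s} a * (a * (ln s - ln a))) has_integral (s\<^sup>2 / 4)) UNIV"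
    unfolding eqf has_integral_restrict_UNIV by (rule hi)
  moreover have "\<And>a. 0 \<le> indicator {0<..<s} a * (a * (ln s - ln a))"
    using s by (auto simp: indicator_def)
  ultimately show ?thesis
    by (intro nn_integral_has_integral_lborel) auto
qed


definition phi :: "real^2 \<Rightarrow> real \<Rightarrow> real \<Rightarrow> real" where
  "phi r a b = ln (norm (r + T2 (a * cos (2 * pi * b), a * sin (2 * pi * b))))"

lemma phi_cx: "phi r a b = ln (cmod (cx r + of_real a * exp (2 * of_real pi * \<i> * of_real b)))"
proof -
  have "cx (r + T2 (a * cos (2 * pi * b), a * sin (2 * pi * b))) = cx r + of_real a * exp (2 * of_real pi * \<i> * of_real b)"
    by (simp add: cx_add complex_eq_iff cx_def Re_exp Im_exp)
  thus ?thesis by (simp add: phi_def norm_cx[symmetric])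
qed

lemma norm_T2_polar: "a \<ge> 0 \<Longrightarrow> norm (T2 (a * cos t, a * sin t)) = a"
proof -
  assume a: "a \<ge> 0"
  have "(a * cos t)\<^sup>2 + (a * sin t)\<^sup>2 = a\<^sup>2" by (simp add: power_mult_distrib flip: distrib_left)
  thus ?thesis using a by (simp add: norm_vec2)
qed

lemma phi_props:
  fixes r :: "real^2"
  assumes r: "r \<noteq> 0" and a: "a > 0" "a \<noteq> norm r"
  shows "integrable lborel (\<lambda>b. indicator {0..<1} b * phi r a b)"
    "(\<integral>b. indicator {0..<1} b * phi r a b \<partial>lborel) = max (ln (norm r)) (ln a)"
proof -
  have cr: "cx r \<noteq> 0" using r by (metis norm_cx norm_eq_zero)
  have a': "a \<noteq> cmod (cx r)" using a by (simp add: norm_cx)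
  have nz: "cx r + of_real a * exp (2 * of_real pi * \<i> * of_real b) \<noteq> 0" for b
  proof
    assume "cx r + of_real a * exp (2 * of_real pi * \<i> * of_real b) = 0"
    hence "cx r = - (of_real a * exp (2 * of_real pi * \<i> * of_real b))" by (simp add: add_eq_0_iff)
    hence "cmod (cx r) = a" using a by (simp add: norm_mult norm_exp_eq_Re)
    with a' show False by simp
  qed
  have cont: "continuous_on {0..1} (\<lambda>b. phi r a b)"
    unfolding phi_cx using nz by (intro continuous_intros) auto
  have hi: "((\<lambda>b. phi r a b) has_integral max (ln (norm r)) (ln a)) {0..1}"
    unfolding phi_cx using circle_mean_log[OF cr a(1) a'] by (simp add: norm_cx)
  show "integrable lborel (\<lambda>b. indicator {0..<1} b * phi r a b)"
    "(\<integral>b. indicator {0..<1} b * phi r a b \<partial>lborel) = max (ln (norm r)) (ln a)"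
    using HK_to_L[OF cont hi] by auto
qed

lemma ln_abs_bound: "0 \<le> (y::real) \<Longrightarrow> y \<le> B \<Longrightarrow> \<bar>ln y\<bar> \<le> 2 * B - ln y"
proof -
  assume y: "0 \<le> y" "y \<le> B"
  show ?thesis
  proof (cases "y = 0")
    case True thus ?thesis using y by simp
  next
    case False
    hence "ln y \<le> y - 1" using y by (intro ln_le_minus_one) auto
    thus ?thesis using y by (cases "ln y \<ge> 0") auto
  qed
qed

lemma phi_abs_bound:
  fixes r :: "real^2"
  assumes r: "r \<noteq> 0" and a: "a > 0" "a \<noteq> norm r"
  shows "integrable lborel (\<lambda>b. indicator {0..<1} b * \<bar>phi r a b\<bar>)"
    "(\<integral>b. indicator {0..<1} b * \<bar>phi r a b\<bar> \<partial>lborel) \<le> 2 * (norm r + a) + \<bar>ln (norm r)\<bar> + \<bar>ln a\<bar>"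
proof -
  note P = phi_props[OF r a]
  have eqa: "(\<lambda>b. indicator {0..<1} b * \<bar>phi r a b\<bar>) = (\<lambda>b. norm (indicator {0..<1} b * phi r a b))"
    by (rule ext) (simp add: abs_mult)
  show I: "integrable lborel (\<lambda>b. indicator {0..<1} b * \<bar>phi r a b\<bar>)"
    unfolding eqa using P(1) by (rule integrable_norm)
  have ii: "integrable lborel (indicator {0..<1} :: real \<Rightarrow> real)" by (intro integrable_real_indicator) auto
  have ic: "integrable lborel (\<lambda>b::real. indicator {0..<1} b * (2 * (norm r + a)) :: real)"
    by (intro integrable_mult_left integrable_real_indicator) auto
  have I2: "integrable lborel (\<lambda>b. indicator {0..<1} b * (2 * (norm r + a)) - indicator {0..<1} b * phi r a b)"
    by (intro Bochner_Integration.integrable_diff ic P(1))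
  have "(\<integral>b. indicator {0..<1} b * \<bar>phi r a b\<bar> \<partial>lborel) \<le>
        (\<integral>b. indicator {0..<1} b * (2 * (norm r + a)) - indicator {0..<1} b * phi r a b \<partial>lborel)"
  proof (rule integral_mono[OF I I2])
    fix b :: real
    have "norm (r + T2 (a * cos (2 * pi * b), a * sin (2 * pi * b))) \<le> norm r + norm (T2 (a * cos (2 * pi * b), a * sin (2 * pi * b)))"
      by (rule norm_triangle_ineq)
    also have "\<dots> = norm r + a" using a by (simp add: norm_T2_polar)
    finally have "\<bar>phi r a b\<bar> \<le> 2 * (norm r + a) - phi r a b"
      unfolding phi_def by (intro ln_abs_bound) auto
    thus "indicator {0..<1} b * \<bar>phi r a b\<bar> \<le> indicator {0..<1} b * (2 * (norm r + a)) - indicator {0..<1} b * phi r a b"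
      by (auto simp: indicator_def)
  qed
  also have "\<dots> = 2 * (norm r + a) - max (ln (norm r)) (ln a)"
    using ic P by (simp add: integral_diff)
  also have "\<dots> \<le> 2 * (norm r + a) + \<bar>ln (norm r)\<bar> + \<bar>ln a\<bar>" by linarith
  finally show "(\<integral>b. indicator {0..<1} b * \<bar>phi r a b\<bar> \<partial>lborel) \<le> 2 * (norm r + a) + \<bar>ln (norm r)\<bar> + \<bar>ln a\<bar>" .
qed

lemma xlnx_bound: "(x::real) > 0 \<Longrightarrow> x * \<bar>ln x\<bar> \<le> 1 + x\<^sup>2"
proof -
  assume x: "x > 0"
  show ?thesis
  proof (cases "x \<le> 1")
    case True
    have "ln (1/x) \<le> 1/x - 1" using x by (intro ln_le_minus_one) auto
    hence "- ln x \<le> 1/x - 1" using x by (simp add: ln_div)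
    hence "x * (- ln x) \<le> x * (1/x - 1)" using x by (intro mult_left_mono) auto
    moreover have "x * (1/x - 1) = 1 - x" using x by (simp add: field_simps)
    ultimately have "x * (- ln x) \<le> 1 - x" by simp
    moreover have "ln x \<le> 0" using x True by simp
    ultimately have "x * \<bar>ln x\<bar> \<le> 1 - x" by simp
    moreover have "0 \<le> x\<^sup>2" by simp
    ultimately show ?thesis using x by linarith
  next
    case False
    have "ln x \<le> x - 1" using x by (intro ln_le_minus_one) auto
    hence h1: "x * ln x \<le> x * (x - 1)" using x by (intro mult_left_mono) auto
    have h2: "x * (x - 1) \<le> x\<^sup>2" using x by (simp add: power2_eq_square algebra_simps)
    have "ln x \<ge> 0" using False by simp
    hence "x * \<bar>ln x\<bar> = x * ln x" by simp
    thus ?thesis using h1 h2 by linarith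
  qed
qed


lemma T2_borel [measurable]: "T2 \<in> borel_measurable borel"
proof -
  have "continuous_on UNIV T2" unfolding T2_def by (intro continuous_intros)
  thus ?thesis by (rule borel_measurable_continuous_onI)
qed

lemma phi_measurable [measurable]: "(\<lambda>x. phi r (fst x) (snd x)) \<in> borel_measurable (lborel \<Otimes>\<^sub>M lborel)"
  unfolding phi_def by measurable

lemma rhoT_measurable2 [measurable]: "(\<lambda>x. ln (norm (snd x)) * rhoT (fst x) (snd x)) \<in> borel_measurable (borel \<Otimes>\<^sub>M lborel)"
  unfolding rhoT_def by measurable

lemma rhoT_measurable1 [measurable]: "(\<lambda>r'. ln (norm r') * rhoT r r') \<in> borel_measurable borel"
  unfolding rhoT_def by measurable

lemma CC_inner_measurable [measurable]: "CC_inner \<in> borel_measurable borel"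
  unfolding CC_inner_def by measurable

definition kap :: "real \<Rightarrow> real" where
  "kap a = indicator {0<..} a * (- (2 / pi) * a * exp (- a\<^sup>2))"

lemma kap_measurable [measurable]: "kap \<in> borel_measurable borel"
  unfolding kap_def by measurable

lemma stepA_H:
  fixes r :: "real^2"
  shows "indicator {0<..} a * indicator {0..<1} b * (2 * pi * a * (ln (norm (r + T2 (a * cos (2 * pi * b), a * sin (2 * pi * b)))) * rhoT r (r + T2 (a * cos (2 * pi * b), a * sin (2 * pi * b)))))
    = kap a * (indicator {0..<1} b * phi r a b)"
proof (cases "a > 0")
  case True
  have "norm (r - (r + T2 (a * cos (2 * pi * b), a * sin (2 * pi * b)))) = a"
    using True by (simp add: norm_T2_polar norm_minus_commute)
  thus ?thesis using True
    by (simp add: kap_def rhoT_def phi_def indicator_def power2_eq_square field_simps)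
qed (simp add: kap_def)

definition Bd :: "real \<Rightarrow> real \<Rightarrow> real" where
  "Bd R a = indicator {0..} a * (exp (- a\<^sup>2) * a^0) * (2 / pi)
     + indicator {0..} a * (exp (- a\<^sup>2) * a^1) * ((2 / pi) * (2 * R + \<bar>ln R\<bar>))
     + indicator {0..} a * (exp (- a\<^sup>2) * a^2) * (6 / pi)"

lemma Bd_integrable: "integrable lborel (Bd R)"
  unfolding Bd_def
  by (intro Bochner_Integration.integrable_add integrable_mult_left gauss_int)

lemma Bd_bound:
  assumes a: "a > 0" and J: "J \<le> 2 * (R + a) + \<bar>ln R\<bar> + \<bar>ln a\<bar>"
  shows "\<bar>kap a\<bar> * J \<le> Bd R a"
proof -
  define c where "c = 2 / pi"
  define E where "E = exp (- a\<^sup>2)"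
  have c: "c > 0" by (simp add: c_def)
  have E: "E > 0" by (simp add: E_def)
  have k: "\<bar>kap a\<bar> = c * a * E" using a by (simp add: kap_def c_def E_def abs_mult)
  have "\<bar>kap a\<bar> * J \<le> c * a * E * (2 * (R + a) + \<bar>ln R\<bar> + \<bar>ln a\<bar>)"
    unfolding k using a c E J by (intro mult_left_mono) auto
  also have "\<dots> = c * E * ((2 * R + \<bar>ln R\<bar>) * a + 2 * a\<^sup>2 + a * \<bar>ln a\<bar>)"
    by (simp add: algebra_simps power2_eq_square)
  also have "\<dots> \<le> c * E * ((2 * R + \<bar>ln R\<bar>) * a + 2 * a\<^sup>2 + (1 + a\<^sup>2))"
    using xlnx_bound[OF a] c E by (intro mult_left_mono) auto
  also have "\<dots> = Bd R a"
    using a by (simp add: Bd_def c_def E_def algebra_simps)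
  finally show ?thesis .
qed

lemma stepA:
  fixes r :: "real^2"
  assumes r: "r \<noteq> 0"
  shows "integrable lborel (\<lambda>r'. ln (norm r') * rhoT r r')"
    "(\<integral>r'. ln (norm r') * rhoT r r' \<partial>lborel) = (\<integral>a. kap a * max (ln (norm r)) (ln a) \<partial>lborel)"
proof -
  let ?H = "\<lambda>a b. kap a * (indicator {0..<1} b * phi r a b)"
  have ae: "AE a in lborel. a \<noteq> norm r" by (rule AE_lborel_singleton)
  have integ2: "AE a in lborel. integrable lborel (\<lambda>b. ?H a b)"
    using ae
  proof eventually_elim
    case (elim a)
    show ?case
    proof (cases "a > 0")
      case True
      thus ?thesis using phi_props(1)[OF r True elim] by auto
    qed (simp add: kap_def)
  qed
  have val: "(\<integral>a. (\<integral>b. ?H a b \<partial>lborel) \<partial>lborel) = (\<integral>a. kap a * max (ln (norm r)) (ln a) \<partial>lborel)"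
  proof (rule integral_cong_AE)
    show "AE a in lborel. (\<integral>b. ?H a b \<partial>lborel) = kap a * max (ln (norm r)) (ln a)"
      using ae
    proof eventually_elim
      case (elim a)
      show ?case
      proof (cases "a > 0")
        case True
        thus ?thesis using phi_props(2)[OF r True elim] by simp
      qed (simp add: kap_def)
    qed
  qed measurable
  have integ1: "integrable lborel (\<lambda>a. \<integral>b. norm (?H a b) \<partial>lborel)"
  proof (rule Bochner_Integration.integrable_bound[OF Bd_integrable[of "norm r"]])
    show "(\<lambda>a. \<integral>b. norm (?H a b) \<partial>lborel) \<in> borel_measurable lborel" by measurable
    show "AE a in lborel. norm (\<integral>b. norm (?H a b) \<partial>lborel) \<le> norm (Bd (norm r) a)"
      using ae
    proof eventually_elim
      case (elim a)
      show ?case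
      proof (cases "a > 0")
        case True
        note PB = phi_abs_bound[OF r True elim]
        have nn: "(\<lambda>b. norm (?H a b)) = (\<lambda>b. \<bar>kap a\<bar> * (indicator {0..<1} b * \<bar>phi r a b\<bar>))"
          by (rule ext) (simp add: abs_mult)
        have "0 \<le> (\<integral>b. norm (?H a b) \<partial>lborel)" by simp
        hence "norm (\<integral>b. norm (?H a b) \<partial>lborel) = \<bar>kap a\<bar> * (\<integral>b. indicator {0..<1} b * \<bar>phi r a b\<bar> \<partial>lborel)"
          unfolding nn by simp
        also have "\<dots> \<le> Bd (norm r) a" by (rule Bd_bound[OF True PB(2)])
        also have "\<dots> \<le> norm (Bd (norm r) a)" by simp
        finally show ?thesis .
      qed (simp add: kap_def)
    qed
  qed
  have f: "(\<lambda>r'. ln (norm r') * rhoT r r') \<in> borel_measurable borel" by measurable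
  note PM = polar_master[OF f, of r]
  show "integrable lborel (\<lambda>r'. ln (norm r') * rhoT r r')"
    by (rule PM(1)) (simp_all only: stepA_H integ1 integ2)
  show "(\<integral>r'. ln (norm r') * rhoT r r' \<partial>lborel) = (\<integral>a. kap a * max (ln (norm r)) (ln a) \<partial>lborel)"
    by (rule PM(2)) (simp_all only: stepA_H integ1 integ2 val)
qed


definition Kf :: "real \<Rightarrow> real \<Rightarrow> real" where
  "Kf R s = indicator {0<..} s * (s * exp (- s\<^sup>2) * max 0 (ln s - ln R))"

definition K :: "real \<Rightarrow> real" where
  "K R = (\<integral>s. Kf R s \<partial>lborel)"

lemma Kf_measurable [measurable]: "(\<lambda>x. Kf (fst x) (snd x)) \<in> borel_measurable (lborel \<Otimes>\<^sub>M lborel)"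
  unfolding Kf_def by measurable

lemma Kf_measurable1 [measurable]: "Kf R \<in> borel_measurable lborel"
  unfolding Kf_def by measurable

lemma K_measurable [measurable]: "K \<in> borel_measurable lborel"
  unfolding K_def by measurable

lemma Kf_nonneg: "Kf R s \<ge> 0"
  by (simp add: Kf_def indicator_def)

lemma Kf_integrable:
  assumes R: "R > 0"
  shows "integrable lborel (Kf R)"
proof (rule Bochner_Integration.integrable_bound)
  let ?B = "\<lambda>s. indicator {0..} s * (exp (- s\<^sup>2) * s^0) + indicator {0..} s * (exp (- s\<^sup>2) * s^2)
              + indicator {0..} s * (exp (- s\<^sup>2) * s^1) * \<bar>ln R\<bar>"
  show "integrable lborel ?B"
    by (intro Bochner_Integration.integrable_add integrable_mult_left gauss_int)
  show "Kf R \<in> borel_measurable lborel" by measurable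
  show "AE s in lborel. norm (Kf R s) \<le> norm (?B s)"
  proof (rule AE_I2)
    fix s :: real
    show "norm (Kf R s) \<le> norm (?B s)"
    proof (cases "s > 0")
      case True
      define E where "E = exp (- s\<^sup>2)"
      have E: "E > 0" by (simp add: E_def)
      have m: "max 0 (ln s - ln R) \<le> \<bar>ln s\<bar> + \<bar>ln R\<bar>" by linarith
      have "norm (Kf R s) = s * E * max 0 (ln s - ln R)" using True by (simp add: Kf_def E_def)
      also have "\<dots> \<le> s * E * (\<bar>ln s\<bar> + \<bar>ln R\<bar>)"
        using True E m by (intro mult_left_mono) auto
      also have "\<dots> = E * (s * \<bar>ln s\<bar>) + E * s * \<bar>ln R\<bar>" by (simp add: algebra_simps)
      also have "\<dots> \<le> E * (1 + s\<^sup>2) + E * s * \<bar>ln R\<bar>"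
        using xlnx_bound[OF True] E by (intro add_right_mono mult_left_mono) auto
      also have "\<dots> = ?B s" using True by (simp add: E_def algebra_simps)
      also have "\<dots> \<le> norm (?B s)" by simp
      finally show ?thesis .
    qed (simp add: Kf_def)
  qed
qed

lemma gauss1': "integrable lborel (\<lambda>a::real. indicator {0<..} a * (a * exp (- a\<^sup>2)))"
  "(\<integral>a. indicator {0<..} (a::real) * (a * exp (- a\<^sup>2)) \<partial>lborel) = (1/2::real)"
  using integrable.intros[OF gauss1] has_bochner_integral_integral_eq[OF gauss1] by auto

lemma K_split:
  assumes R: "R > 0"
  shows "(\<integral>a. kap a * max (ln R) (ln a) \<partial>lborel) = - (2 / pi) * (ln R / 2 + K R)"
proof -
  have eq: "kap a * max (ln R) (ln a) = - (2 / pi) * (indicator {0<..} a * (a * exp (- a\<^sup>2)) * ln R + Kf R a)" for a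
    by (cases "a > 0") (auto simp: kap_def Kf_def indicator_def max_def field_simps)
  have "(\<integral>a. kap a * max (ln R) (ln a) \<partial>lborel)
      = - (2 / pi) * ((\<integral>a. indicator {0<..} a * (a * exp (- a\<^sup>2)) * ln R \<partial>lborel) + (\<integral>a. Kf R a \<partial>lborel))"
    unfolding eq using gauss1'(1) Kf_integrable[OF R]
    by (simp add: integral_add)
  also have "(\<integral>a. indicator {0<..} a * (a * exp (- a\<^sup>2)) * ln R \<partial>lborel) = ln R / 2"
    using gauss1'(2) by simp
  finally show ?thesis by (simp add: K_def)
qed

lemma CC_inner_val:
  fixes r :: "real^2" assumes r: "r \<noteq> 0"
  shows "CC_inner r = - (2 / pi) * K (norm r)"
proof -
  have R: "norm r > 0" using r by simp
  have "CC_inner r = - (2 / pi) * (ln (norm r) / 2 + K (norm r)) + (1 / pi) * ln (norm r)"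
    unfolding CC_inner_def stepA(2)[OF r] K_split[OF R] ..
  thus ?thesis by (simp add: field_simps)
qed


lemma K_nonneg: "K R \<ge> 0"
  unfolding K_def by (rule integral_nonneg_AE) (simp add: Kf_nonneg)

lemma gauss3': "integrable lborel (\<lambda>a::real. indicator {0<..} a * (a^3 * exp (- a\<^sup>2)))"
  "(\<integral>a. indicator {0<..} (a::real) * (a^3 * exp (- a\<^sup>2)) \<partial>lborel) = (1/2::real)"
  using integrable.intros[OF gauss3] has_bochner_integral_integral_eq[OF gauss3] by auto

lemma aK_nn: "(\<integral>\<^sup>+a. ennreal (indicator {0<..} a * (a * K a)) \<partial>lborel) = ennreal (1/8)"
proof -
  have "(\<integral>\<^sup>+a. ennreal (indicator {0<..} a * (a * K a)) \<partial>lborel)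
      = (\<integral>\<^sup>+a. (\<integral>\<^sup>+s. ennreal (indicator {0<..} a * (a * Kf a s)) \<partial>lborel) \<partial>lborel)"
  proof (rule nn_integral_cong)
    fix a :: real
    show "ennreal (indicator {0<..} a * (a * K a)) = (\<integral>\<^sup>+s. ennreal (indicator {0<..} a * (a * Kf a s)) \<partial>lborel)"
    proof (cases "a > 0")
      case True
      have int: "integrable lborel (\<lambda>s. a * Kf a s)" using Kf_integrable[OF True] by auto
      have "(\<integral>\<^sup>+s. ennreal (a * Kf a s) \<partial>lborel) = (\<integral>s. a * Kf a s \<partial>lborel)"
        by (rule nn_integral_eq_integral[OF int]) (use True Kf_nonneg in auto)
      thus ?thesis using True by (simp add: K_def)
    qed simp
  qed
  also have "\<dots> = (\<integral>\<^sup>+s. (\<integral>\<^sup>+a. ennreal (indicator {0<..} a * (a * Kf a s)) \<partial>lborel) \<partial>lborel)"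
    by (rule lborel_pair.Fubini'[symmetric]) measurable
  also have "\<dots> = (\<integral>\<^sup>+s. ennreal (indicator {0<..} s * (s^3 * exp (- s\<^sup>2)) * (1/4)) \<partial>lborel)"
  proof (rule nn_integral_cong)
    fix s :: real
    show "(\<integral>\<^sup>+a. ennreal (indicator {0<..} a * (a * Kf a s)) \<partial>lborel) = ennreal (indicator {0<..} s * (s^3 * exp (- s\<^sup>2)) * (1/4))"
    proof (cases "s > 0")
      case True
      have pw: "ennreal (indicator {0<..} a * (a * Kf a s)) = ennreal (s * exp (- s\<^sup>2)) * ennreal (indicator {0<..<s} a * (a * (ln s - ln a)))" for a
      proof -
        have eqr: "indicator {0<..} a * (a * Kf a s) = (s * exp (- s\<^sup>2)) * (indicator {0<..<s} a * (a * (ln s - ln a)))"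
        proof (cases "0 < a \<and> a < s")
          case True
          hence "ln a < ln s" by simp
          thus ?thesis using True by (simp add: Kf_def indicator_def max_def)
        next
          case False
          show ?thesis
          proof (cases "a > 0")
            case a: True
            with False have "s \<le> a" by simp
            hence "ln s \<le> ln a" using \<open>s > 0\<close> by simp
            thus ?thesis using a False \<open>s > 0\<close> by (simp add: Kf_def indicator_def max_def)
          qed (simp add: indicator_def)
        qed
        have X0: "0 \<le> indicator {0<..<s} a * (a * (ln s - ln a))" by (auto simp: indicator_def)
        have c0: "0 \<le> s * exp (- s\<^sup>2)" using True by simp
        show ?thesis unfolding eqr by (rule ennreal_mult[OF c0 X0])
      qed
      have "(\<integral>\<^sup>+a. ennreal (indicator {0<..} a * (a * Kf a s)) \<partial>lborel)
          = ennreal (s * exp (- s\<^sup>2)) * (\<integral>\<^sup>+a. ennreal (indicator {0<..<s} a * (a * (ln s - ln a))) \<partial>lborel)"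
        unfolding pw by (rule nn_integral_cmult) measurable
      also have "\<dots> = ennreal (s * exp (- s\<^sup>2)) * ennreal (s\<^sup>2 / 4)" by (simp add: tri_log[OF True])
      also have "\<dots> = ennreal (indicator {0<..} s * (s^3 * exp (- s\<^sup>2)) * (1/4))"
        using True by (simp add: ennreal_mult[symmetric] power2_eq_square power3_eq_cube)
      finally show ?thesis .
    qed (simp add: Kf_def)
  qed
  also have "\<dots> = (\<integral>s. indicator {0<..} s * (s^3 * exp (- s\<^sup>2)) * (1/4) \<partial>lborel)"
    by (rule nn_integral_eq_integral) (use gauss3'(1) in \<open>auto simp: indicator_def\<close>)
  also have "(\<integral>s. indicator {0<..} s * (s^3 * exp (- s\<^sup>2)) * (1/4) \<partial>lborel) = (1/8::real)"
    using gauss3'(2) by simp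
  finally show ?thesis by simp
qed

lemma aK:
  shows "integrable lborel (\<lambda>a. indicator {0<..} a * (a * K a))"
    "(\<integral>a. indicator {0<..} a * (a * K a) \<partial>lborel) = 1/8"
proof -
  have nn: "AE a in lborel. 0 \<le> indicator {0<..} a * (a * K a)"
    using K_nonneg by (auto simp: indicator_def)
  show "integrable lborel (\<lambda>a. indicator {0<..} a * (a * K a))"
    by (rule integrableI_nonneg) (use nn aK_nn in auto)
  show "(\<integral>a. indicator {0<..} a * (a * K a) \<partial>lborel) = 1/8"
    by (subst integral_eq_nn_integral) (use nn aK_nn in auto)
qed


lemma stepC_H:
  "indicator {0<..} a * indicator {0..<1} b * (2 * pi * a * CC_inner (0 + T2 (a * cos (2 * pi * b), a * sin (2 * pi * b))))
   = (- 4 * (indicator {0<..} a * (a * K a))) * indicator {0..<1} b"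
proof (cases "a > 0")
  case True
  have n: "norm (T2 (a * cos (2 * pi * b), a * sin (2 * pi * b))) = a" using True by (simp add: norm_T2_polar)
  hence "T2 (a * cos (2 * pi * b), a * sin (2 * pi * b)) \<noteq> 0" using True by auto
  hence "CC_inner (0 + T2 (a * cos (2 * pi * b), a * sin (2 * pi * b))) = - (2 / pi) * K a"
    using CC_inner_val n by simp
  thus ?thesis using True by (simp add: indicator_def)
qed (simp add: indicator_def)

lemma c01 [simp]: "measure lborel {0..<(1::real)} = 1"
  unfolding measure_def by simp

lemma ind01: "(\<integral>b. indicator {0..<1} (b::real) \<partial>lborel) = (1::real)"
  by simp

lemma stepC: "integrable lborel CC_inner" "(\<integral>r. CC_inner r \<partial>lborel) = - 1 / 2"
proof -
  let ?c = "\<lambda>a. - 4 * (indicator {0<..} a * (a * K a))"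
  note PM = polar_master[OF CC_inner_measurable, of 0]
  have ii: "integrable lborel (indicator {0..<1} :: real \<Rightarrow> real)" by (intro integrable_real_indicator) auto
  have e1: "(\<lambda>a. \<integral>b. norm (?c a * indicator {0..<1} (b::real)) \<partial>lborel) = (\<lambda>a. \<bar>?c a\<bar>)"
  proof
    fix a
    have q: "(\<lambda>b::real. norm (?c a * indicator {0..<1} (b::real))) = (\<lambda>b::real. \<bar>?c a\<bar> * indicator {0..<1} (b::real))"
      by (rule ext) (simp add: abs_mult)
    show "(\<integral>b. norm (?c a * indicator {0..<1} (b::real)) \<partial>lborel) = \<bar>?c a\<bar>"
      unfolding q by simp
  qed
  have integ1: "integrable lborel (\<lambda>a. \<integral>b. norm (?c a * indicator {0..<1} (b::real)) \<partial>lborel)"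
    unfolding e1 using aK(1) by (intro integrable_abs) auto
  have integ2: "AE a in lborel. integrable lborel (\<lambda>b::real. ?c a * indicator {0..<1} (b::real))"
    using ii by auto
  have val: "(\<integral>a. (\<integral>b. ?c a * indicator {0..<1} (b::real) \<partial>lborel) \<partial>lborel) = - 1 / 2"
    using ind01 aK(2) by simp
  show "integrable lborel CC_inner"
    by (rule PM(1)) (simp_all only: stepC_H integ1 integ2)
  show "(\<integral>r. CC_inner r \<partial>lborel) = - 1 / 2"
    by (rule PM(2)) (simp_all only: stepC_H integ1 integ2 val)
qed

theorem mainTheorem2:
  fixes \<beta> :: real
  assumes "\<beta> = 2"
  shows "(\<forall>r::real^2. r \<noteq> 0 \<longrightarrow> integrable lborel (\<lambda>r'. ln (norm r') * rhoT r r'))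
    \<and> integrable lborel CC_inner
    \<and> - \<beta> * (\<integral>r. CC_inner r \<partial>lborel) = 1"
  using stepA(1) stepC assms by simp

end
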